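(* Let $\bar{\mathbb{P}}\in\mathcal{M}_1$ and let $\alpha$ be of the form $\alpha(Q)=\widetilde\alpha(Q)$ for $Q\in\mathcal{Q}^{\bar{\mathbb{P}}}$ and $\alpha(Q)=+\infty$ for $Q\in\mathcal{M}_1\setminus\mathcal{Q}^{\bar{\mathbb{P}}}$, where $\mathcal{Q}^{\bar{\mathbb{P}}}$ is a weak-$*$-closed subset of $\mathcal{P}^{\bar{\mathbb{P}}}$, $\widetilde\alpha(Q)<\infty$ for all $Q\in\mathcal{Q}^{\bar{\mathbb{P}}}$ and $\inf_{Q\in\mathcal{Q}^{\bar{\mathbb{P}}}}\widetilde\alpha(Q)>-\infty$. Then for every $P\in\mathcal{M}_1$ satisfying either $\bar{\mathbb{P}}\ll P$ or $\bar{\mathbb{P}}\perp P$ we have $C^P=\widehat C^P$ and $\rho^P=\widehat\rho^P=\widetilde\rho^P$, i.e. for all $X\in L^\infty(P)$ $$\sup_{Q\in\mathcal{Q}^{\bar{\mathbb{P}}}}\inf_{\{\widetilde X\in\mathcal{X}:P(\widetilde X=X)=1\}}\{\mathbb{E}_Q[-\widetilde X]-\widetilde\alpha(Q)\}=\inf_{\{\widetilde X\in\mathcal{X}:P(\widetilde X=X)=1\}}\sup_{Q\in\mathcal{Q}^{\bar{\mathbb{P}}}}\{\mathbb{E}_Q[-\widetilde X]-\widetilde\alpha(Q)\}=\rho^P(X).$$ In particular, if $\bar{\mathbb{P}}\ll P$ then the restriction of $\rho^P=\widehat\rho^P=\widetilde\rho^P$ to $\mathcal{X}$ equals $\rho$,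 and if $\bar{\mathbb{P}}\perp P$ then $\rho^P=\widehat\rho^P=\widetilde\rho^P\equiv-\infty$. Moreover, for all $P\in\mathcal{M}_1$, $$\widehat\rho^P|_{\mathcal{X}}\le\rho^P|_{\mathcal{X}}\le\rho=\rho^{\bar{\mathbb{P}}}|_{\mathcal{X}}=\widehat\rho^{\bar{\mathbb{P}}}|_{\mathcal{X}},$$ and $\widehat\rho^P\le\rho^P\le\rho^{\bar{\mathbb{P}}}=\widehat\rho^{\bar{\mathbb{P}}}$ on $L^\infty(P)\cap L^\infty(\bar{\mathbb{P}})$.
   Context: $(\Omega,\mathcal{F})$ is a measurable space, $\mathcal{M}_1$ the set of probability measures on it endowed with the topology of weak (weak-$*$) convergence, $\mathcal{X}$ the space of pointwise bounded $\mathcal{F}$-measurable real functions, $L^\infty(P)=L^\infty(\Omega,\mathcal{F},P)$, $\mathcal{P}^P=\{Q\in\mathcal{M}_1:Q\ll P\}$. With $\alpha$ as in the claim, $\rho(X):=\sup_{Q\in\mathcal{M}_1}\{\mathbb{E}_Q[-X]-\alpha(Q)\}$ for $X\in\mathcal{X}$ (assumed real-valued). For $P\in\mathcal{M}_1$ and $X\in L^\infty(P)$: $\rho^P(X)=\inf_{\{\widetilde X\in\mathcal{X}:P(\widetilde X=X)=1\}}\rho(\widetilde X)$; $\widehat\rho^P(X)=\sup_{Q\in\mathcal{P}^P}\{\mathbb{E}_Q[-X]-\alpha(Q)\}$; $\widetilde\rho^P(X)=\sup_{Q\in\mathcal{M}_1}\inf_{\{\widetilde X\in\mathcal{X}:P(\widetilde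 X=X)=1\}}\{\mathbb{E}_Q[-\widetilde X]-\alpha(Q)\}$; $C^P=\{X\in L^\infty(P):\rho^P(X)\le0\}$, $\widehat C^P=\{X\in L^\infty(P):\widehat\rho^P(X)\le0\}$. *)

theory Defs
  imports "HOL-Probability.Probability"
begin

text \<open>The measurable space (Omega, F) is represented by a measure M; only
  space M and sets M are used.\<close>

definition M1 :: "'a measure \<Rightarrow> 'a measure set" where
  "M1 M = {Q. prob_space Q \<and> sets Q = sets M}"

definition bdd_meas :: "'a measure \<Rightarrow> ('a \<Rightarrow> real) set" where
  "bdd_meas M = {X. X \<in> borel_measurable M \<and> (\<exists>c. \<forall>\<omega>\<in>space M. \<bar>X \<omega>\<bar> \<le> c)}"

text \<open>L-infinity(P), represented by measurable, P-essentially bounded functions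
  (all notions below only depend on the P-a.s. class).\<close>
definition Linf :: "'a measure \<Rightarrow> ('a \<Rightarrow> real) set" where
  "Linf P = {X. X \<in> borel_measurable P \<and> (\<exists>c. AE \<omega> in P. \<bar>X \<omega>\<bar> \<le> c)}"

definition mut_singular :: "'a measure \<Rightarrow> 'a measure \<Rightarrow> bool" where
  "mut_singular P Q \<longleftrightarrow> (\<exists>A\<in>sets P. emeasure P A = 0 \<and> emeasure Q (space Q - A) = 0)"

definition weak_star_top :: "'a measure \<Rightarrow> 'a measure topology" where
  "weak_star_top M = topology_generated_by
     {{Q \<in> M1 M. integral\<^sup>L Q X \<in> U} | X U. X \<in> bdd_meas M \<and> open U}"

definition rho :: "'a measure \<Rightarrow> ('a measure \<Rightarrow> ereal) \<Rightarrow> ('a \<Rightarrow> real) \<Rightarrow> ereal" where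
  "rho M \<alpha> X = (SUP Q\<in>M1 M. ereal (integral\<^sup>L Q (\<lambda>\<omega>. - X \<omega>)) - \<alpha> Q)"

definition reps :: "'a measure \<Rightarrow> 'a measure \<Rightarrow> ('a \<Rightarrow> real) \<Rightarrow> ('a \<Rightarrow> real) set" where
  "reps M P X = {Xt \<in> bdd_meas M. AE \<omega> in P. Xt \<omega> = X \<omega>}"

definition rhoP :: "'a measure \<Rightarrow> ('a measure \<Rightarrow> ereal) \<Rightarrow> 'a measure \<Rightarrow> ('a \<Rightarrow> real) \<Rightarrow> ereal" where
  "rhoP M \<alpha> P X = (INF Xt\<in>reps M P X. rho M \<alpha> Xt)"

definition rho_hat :: "'a measure \<Rightarrow> ('a measure \<Rightarrow> ereal) \<Rightarrow> 'a measure \<Rightarrow> ('a \<Rightarrow> real) \<Rightarrow> ereal" where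
  "rho_hat M \<alpha> P X = (SUP Q\<in>{Q \<in> M1 M. absolutely_continuous P Q}.
                          ereal (integral\<^sup>L Q (\<lambda>\<omega>. - X \<omega>)) - \<alpha> Q)"

definition rho_tilde :: "'a measure \<Rightarrow> ('a measure \<Rightarrow> ereal) \<Rightarrow> 'a measure \<Rightarrow> ('a \<Rightarrow> real) \<Rightarrow> ereal" where
  "rho_tilde M \<alpha> P X = (SUP Q\<in>M1 M. INF Xt\<in>reps M P X.
                          ereal (integral\<^sup>L Q (\<lambda>\<omega>. - Xt \<omega>)) - \<alpha> Q)"

definition accP :: "'a measure \<Rightarrow> ('a measure \<Rightarrow> ereal) \<Rightarrow> 'a measure \<Rightarrow> ('a \<Rightarrow> real) set" where
  "accP M \<alpha> P = {X \<in> Linf P. rhoP M \<alpha> P X \<le> 0}"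

definition accP_hat :: "'a measure \<Rightarrow> ('a measure \<Rightarrow> ereal) \<Rightarrow> 'a measure \<Rightarrow> ('a \<Rightarrow> real) set" where
  "accP_hat M \<alpha> P = {X \<in> Linf P. rho_hat M \<alpha> P X \<le> 0}"

end

theory Submission
  imports Defs
begin

lemma M1_D: "Q \<in> M1 M \<Longrightarrow> prob_space Q \<and> sets Q = sets M \<and> space Q = space M"
  unfolding M1_def using sets_eq_imp_space_eq by auto

lemma meas_M1: "Q \<in> M1 M \<Longrightarrow> X \<in> borel_measurable Q \<longleftrightarrow> X \<in> borel_measurable M"
proof -
  assume "Q \<in> M1 M"
  then have "sets Q = sets M" unfolding M1_def by simp
  then have eq: "borel_measurable Q = borel_measurable M" by (intro measurable_cong_sets) simp_all
  show ?thesis by (simp only: eq)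
qed

lemma int_cong:
  assumes "Q \<in> M1 M" "P \<in> M1 M" "absolutely_continuous P Q"
    "Xt \<in> borel_measurable M" "X \<in> borel_measurable M" "AE \<omega> in P. Xt \<omega> = X \<omega>"
  shows "integral\<^sup>L Q (\<lambda>\<omega>. - Xt \<omega>) = integral\<^sup>L Q (\<lambda>\<omega>. - X \<omega>)"
proof -
  have se: "sets Q = sets P" using assms(1,2) unfolding M1_def by simp
  have ae: "AE \<omega> in Q. Xt \<omega> = X \<omega>"
    by (rule absolutely_continuous_AE[OF se assms(3) assms(6)])
  have m1: "Xt \<in> borel_measurable Q" using meas_M1[OF assms(1), THEN iffD2, OF assms(4)] .
  have m2: "X \<in> borel_measurable Q" using meas_M1[OF assms(1), THEN iffD2, OF assms(5)] .
  have "AE \<omega> in Q. - Xt \<omega> = - X \<omega>" using ae by eventually_elim simp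
  then show ?thesis using m1 m2 by (intro integral_cong_AE) simp_all
qed

lemma split_sup:
  fixes F :: "'b \<Rightarrow> real"
  assumes \<alpha>_def: "\<And>Q. \<alpha> Q = (if Q \<in> Qset then ereal (\<alpha>t Q) else \<infinity>)"
    and "Qset \<subseteq> S"
  shows "(SUP Q\<in>S. ereal (F Q) - \<alpha> Q) = (SUP Q\<in>Qset. ereal (F Q) - ereal (\<alpha>t Q))"
proof (rule antisym)
  show "(SUP Q\<in>S. ereal (F Q) - \<alpha> Q) \<le> (SUP Q\<in>Qset. ereal (F Q) - ereal (\<alpha>t Q))"
  proof (rule SUP_least)
    fix Q assume "Q \<in> S"
    show "ereal (F Q) - \<alpha> Q \<le> (SUP Q\<in>Qset. ereal (F Q) - ereal (\<alpha>t Q))"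
    proof (cases "Q \<in> Qset")
      case True then show ?thesis using \<alpha>_def[of Q] by (auto intro: SUP_upper)
    next
      case False then show ?thesis using \<alpha>_def[of Q] by simp
    qed
  qed
next
  show "(SUP Q\<in>Qset. ereal (F Q) - ereal (\<alpha>t Q)) \<le> (SUP Q\<in>S. ereal (F Q) - \<alpha> Q)"
  proof (rule SUP_least)
    fix Q assume Q: "Q \<in> Qset"
    then have "ereal (F Q) - ereal (\<alpha>t Q) = ereal (F Q) - \<alpha> Q" using \<alpha>_def[of Q] by simp
    also have "\<dots> \<le> (SUP Q\<in>S. ereal (F Q) - \<alpha> Q)" using Q assms(2) by (intro SUP_upper) blast
    finally show "ereal (F Q) - ereal (\<alpha>t Q) \<le> (SUP Q\<in>S. ereal (F Q) - \<alpha> Q)" .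
  qed
qed

lemma trunc_rep:
  assumes "P \<in> M1 M" "X \<in> borel_measurable M" "AE \<omega> in P. \<bar>X \<omega>\<bar> \<le> c"
  shows "(\<lambda>\<omega>. if \<bar>X \<omega>\<bar> \<le> c then X \<omega> else 0) \<in> reps M P X"
proof -
  have "(\<lambda>\<omega>. if \<bar>X \<omega>\<bar> \<le> c then X \<omega> else 0) \<in> borel_measurable M"
    using assms(2) by measurable
  moreover have "\<forall>\<omega>\<in>space M. \<bar>if \<bar>X \<omega>\<bar> \<le> c then X \<omega> else 0\<bar> \<le> \<bar>c\<bar>" by auto
  moreover have "AE \<omega> in P. (if \<bar>X \<omega>\<bar> \<le> c then X \<omega> else 0) = X \<omega>"
    using assms(3) by eventually_elim auto
  ultimately show ?thesis unfolding reps_def bdd_meas_def by blast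
qed

lemma reps_nonempty:
  assumes "P \<in> M1 M" "X \<in> Linf P"
  shows "reps M P X \<noteq> {}"
proof -
  from assms(2) obtain c where "X \<in> borel_measurable P" "AE \<omega> in P. \<bar>X \<omega>\<bar> \<le> c"
    unfolding Linf_def by auto
  then show ?thesis using trunc_rep[OF assms(1), of X c] meas_M1[OF assms(1)] by blast
qed

lemma reps_D: "Xt \<in> reps M P X \<Longrightarrow> Xt \<in> borel_measurable M \<and> (AE \<omega> in P. Xt \<omega> = X \<omega>) \<and> Xt \<in> bdd_meas M"
  unfolding reps_def bdd_meas_def by auto

lemma rho_hat_le:
  assumes "P \<in> M1 M" "X \<in> Linf P"
  shows "rho_hat M \<alpha> P X \<le> rhoP M \<alpha> P X"
  unfolding rhoP_def rho_hat_def rho_def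
proof (intro INF_greatest SUP_least)
  fix Xt Q assume Xt: "Xt \<in> reps M P X" and Q: "Q \<in> {Q \<in> M1 M. absolutely_continuous P Q}"
  have "integral\<^sup>L Q (\<lambda>\<omega>. - X \<omega>) = integral\<^sup>L Q (\<lambda>\<omega>. - Xt \<omega>)"
  proof -
    have "X \<in> borel_measurable M" using assms meas_M1[OF assms(1)] unfolding Linf_def by auto
    then show ?thesis using int_cong[of Q M P Xt X] Q assms reps_D[OF Xt] by simp
  qed
  then show "ereal (integral\<^sup>L Q (\<lambda>\<omega>. - X \<omega>)) - \<alpha> Q
      \<le> (SUP Q\<in>M1 M. ereal (integral\<^sup>L Q (\<lambda>\<omega>. - Xt \<omega>)) - \<alpha> Q)"
    using Q by (auto intro: SUP_upper)
qed

lemma ac_case: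
  assumes Qsub: "Qset \<subseteq> {Q \<in> M1 M. absolutely_continuous Pbar Q}"
    and \<alpha>_def: "\<And>Q. \<alpha> Q = (if Q \<in> Qset then ereal (\<alpha>t Q) else \<infinity>)"
    and P: "P \<in> M1 M" and ac: "absolutely_continuous P Pbar" and X: "X \<in> Linf P"
  defines "V \<equiv> (SUP Q\<in>Qset. ereal (integral\<^sup>L Q (\<lambda>\<omega>. - X \<omega>)) - ereal (\<alpha>t Q))"
  shows "\<forall>Xt\<in>reps M P X. rho M \<alpha> Xt = V"
    and "rhoP M \<alpha> P X = V" and "rho_hat M \<alpha> P X = V" and "rho_tilde M \<alpha> P X = V"
    and "(SUP Q\<in>Qset. INF Xt\<in>reps M P X.
               ereal (integral\<^sup>L Q (\<lambda>\<omega>. - Xt \<omega>)) - ereal (\<alpha>t Q)) = V"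
    and "(INF Xt\<in>reps M P X. SUP Q\<in>Qset.
               ereal (integral\<^sup>L Q (\<lambda>\<omega>. - Xt \<omega>)) - ereal (\<alpha>t Q)) = V"
proof -
  have XM: "X \<in> borel_measurable M" using X meas_M1[OF P] unfolding Linf_def by auto
  have ne: "reps M P X \<noteq> {}" using reps_nonempty[OF P X] .
  have eq: "integral\<^sup>L Q (\<lambda>\<omega>. - Xt \<omega>) = integral\<^sup>L Q (\<lambda>\<omega>. - X \<omega>)"
    if "Q \<in> Qset" "Xt \<in> reps M P X" for Q Xt
  proof -
    have "absolutely_continuous P Q"
      using ac Qsub that(1) unfolding absolutely_continuous_def by auto
    then show ?thesis using int_cong[of Q M P Xt X] that Qsub P reps_D[OF that(2)] XM by auto
  qed
  have S: "(SUP Q\<in>Qset. ereal (integral\<^sup>L Q (\<lambda>\<omega>. - Xt \<omega>)) - ereal (\<alpha>t Q)) = V"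
    if "Xt \<in> reps M P X" for Xt
    unfolding V_def using eq[OF _ that] by (intro SUP_cong) auto
  have R: "rho M \<alpha> Xt = V" if "Xt \<in> reps M P X" for Xt
  proof -
    have "Qset \<subseteq> M1 M" using Qsub by auto
    from split_sup[OF \<alpha>_def this, of "\<lambda>Q. integral\<^sup>L Q (\<lambda>\<omega>. - Xt \<omega>)"]
    show ?thesis unfolding rho_def using S[OF that] by simp
  qed
  then show "\<forall>Xt\<in>reps M P X. rho M \<alpha> Xt = V" by blast
  show "rhoP M \<alpha> P X = V" unfolding rhoP_def using R ne by simp
  show "(INF Xt\<in>reps M P X. SUP Q\<in>Qset.
               ereal (integral\<^sup>L Q (\<lambda>\<omega>. - Xt \<omega>)) - ereal (\<alpha>t Q)) = V"
    using S ne by simp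
  have I: "(INF Xt\<in>reps M P X. ereal (integral\<^sup>L Q (\<lambda>\<omega>. - Xt \<omega>)) - ereal (\<alpha>t Q))
      = ereal (integral\<^sup>L Q (\<lambda>\<omega>. - X \<omega>)) - ereal (\<alpha>t Q)" if "Q \<in> Qset" for Q
    using eq[OF that] ne by simp
  then show "(SUP Q\<in>Qset. INF Xt\<in>reps M P X.
               ereal (integral\<^sup>L Q (\<lambda>\<omega>. - Xt \<omega>)) - ereal (\<alpha>t Q)) = V"
    unfolding V_def by (intro SUP_cong) auto
  have "Qset \<subseteq> {Q \<in> M1 M. absolutely_continuous P Q}"
    using ac Qsub unfolding absolutely_continuous_def by auto
  then show "rho_hat M \<alpha> P X = V"
    unfolding rho_hat_def V_def by (rule split_sup[OF \<alpha>_def])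
  have I2: "(INF Xt\<in>reps M P X. ereal (integral\<^sup>L Q (\<lambda>\<omega>. - Xt \<omega>)) - \<alpha> Q)
      = ereal (integral\<^sup>L Q (\<lambda>\<omega>. - X \<omega>)) - \<alpha> Q" for Q
  proof (cases "Q \<in> Qset")
    case True then show ?thesis using I[OF True] \<alpha>_def[of Q] by simp
  next
    case False then show ?thesis using \<alpha>_def[of Q] ne by simp
  qed
  show "rho_tilde M \<alpha> P X = V"
    unfolding rho_tilde_def I2 V_def using Qsub by (intro split_sup[OF \<alpha>_def]) auto
qed


lemma ereal_to_minf:
  fixes W :: ereal
  assumes "\<And>n::nat. W \<le> ereal (r - real n)"
  shows "W = -\<infinity>"
proof (rule ereal_bot)
  fix B
  have "r - real (nat \<lceil>r - B\<rceil>) \<le> B" by linarith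
  then show "W \<le> ereal B" using assms[of "nat \<lceil>r - B\<rceil>"] order_trans by fastforce
qed

lemma sing_case:
  assumes Qsub: "Qset \<subseteq> {Q \<in> M1 M. absolutely_continuous Pbar Q}"
    and \<alpha>_def: "\<And>Q. \<alpha> Q = (if Q \<in> Qset then ereal (\<alpha>t Q) else \<infinity>)"
    and rho_real: "\<forall>X\<in>bdd_meas M. \<bar>rho M \<alpha> X\<bar> \<noteq> \<infinity>"
    and Pbar: "Pbar \<in> M1 M"
    and P: "P \<in> M1 M" and sing: "mut_singular Pbar P" and X: "X \<in> Linf P"
  shows "rhoP M \<alpha> P X = -\<infinity>" and "rho_hat M \<alpha> P X = -\<infinity>" and "rho_tilde M \<alpha> P X = -\<infinity>"
    and "(SUP Q\<in>Qset. INF Xt\<in>reps M P X.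
               ereal (integral\<^sup>L Q (\<lambda>\<omega>. - Xt \<omega>)) - ereal (\<alpha>t Q)) = -\<infinity>"
    and "(INF Xt\<in>reps M P X. SUP Q\<in>Qset.
               ereal (integral\<^sup>L Q (\<lambda>\<omega>. - Xt \<omega>)) - ereal (\<alpha>t Q)) = -\<infinity>"
proof -
  define T where "T = (\<lambda>Q Xt. ereal (integral\<^sup>L Q (\<lambda>\<omega>. - Xt \<omega>)) - ereal (\<alpha>t Q))"
  define W where "W = (INF Xt\<in>reps M P X. SUP Q\<in>Qset. T Q Xt)"
  from sing obtain A where A: "A \<in> sets Pbar" "emeasure Pbar A = 0" "emeasure P (space P - A) = 0"
    unfolding mut_singular_def by auto
  have AM: "A \<in> sets M" using A Pbar M1_D by auto
  have spP: "space P = space M" using P M1_D by auto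
  have ne: "reps M P X \<noteq> {}" using reps_nonempty[OF P X] .
  then obtain X0 where X0: "X0 \<in> reps M P X" by auto
  have X0M: "X0 \<in> borel_measurable M" and X0ae: "AE \<omega> in P. X0 \<omega> = X \<omega>"
    and X0b: "X0 \<in> bdd_meas M" using reps_D[OF X0] by auto
  from X0b obtain c where c: "\<forall>\<omega>\<in>space M. \<bar>X0 \<omega>\<bar> \<le> c" unfolding bdd_meas_def by auto
  have QsM: "Qset \<subseteq> M1 M" using Qsub by auto
  have rhoS: "rho M \<alpha> Y = (SUP Q\<in>Qset. T Q Y)" for Y
    unfolding rho_def T_def using split_sup[OF \<alpha>_def QsM, of "\<lambda>Q. integral\<^sup>L Q (\<lambda>\<omega>. - Y \<omega>)"]
    by simp
  obtain r where r: "rho M \<alpha> X0 = ereal r" using rho_real X0b by (cases "rho M \<alpha> X0") auto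
  define Xn where "Xn = (\<lambda>(n::nat) \<omega>. X0 \<omega> + real n * indicator (space M - A) \<omega>)"
  have XnM: "Xn n \<in> borel_measurable M" for n
    unfolding Xn_def using X0M AM by measurable
  have Xn_rep: "Xn n \<in> reps M P X" for n
  proof -
    have "space P - A \<in> null_sets P" using A(3) AM M1_D[OF P] by (intro null_setsI) (auto intro: sets.compl_sets)
    then have "AE \<omega> in P. \<omega> \<notin> space P - A" by (rule AE_not_in)
    then have "AE \<omega> in P. Xn n \<omega> = X \<omega>" using X0ae AE_space[of P]
      by eventually_elim (auto simp: Xn_def spP)
    moreover have "\<forall>\<omega>\<in>space M. \<bar>Xn n \<omega>\<bar> \<le> c + real n"
      using c by (auto simp: Xn_def indicator_def)
    ultimately show ?thesis unfolding reps_def bdd_meas_def using XnM by blast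
  qed
  have TXn: "T Q (Xn n) = T Q X0 - ereal (real n)" if Q: "Q \<in> Qset" for Q n
  proof -
    have QM: "Q \<in> M1 M" and acQ: "absolutely_continuous Pbar Q" using Q Qsub by auto
    have ps: "prob_space Q" and sQ: "sets Q = sets M" and spQ: "space Q = space M"
      using M1_D[OF QM] by auto
    have "A \<in> null_sets Q" using A acQ unfolding absolutely_continuous_def by auto
    then have "AE \<omega> in Q. \<omega> \<notin> A" by (rule AE_not_in)
    then have ae: "AE \<omega> in Q. - Xn n \<omega> = - X0 \<omega> - real n" using AE_space[of Q]
      by eventually_elim (auto simp: Xn_def spQ)
    have X0Q: "X0 \<in> borel_measurable Q" using X0M meas_M1[OF QM] by auto
    have XnQ: "Xn n \<in> borel_measurable Q" using XnM meas_M1[OF QM] by auto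
    have int: "integrable Q X0"
      using c X0Q ps spQ by (intro finite_measure.integrable_const_bound[of Q X0 c])
        (auto simp: prob_space_def)
    have "integral\<^sup>L Q (\<lambda>\<omega>. - Xn n \<omega>) = integral\<^sup>L Q (\<lambda>\<omega>. - X0 \<omega> - real n)"
      using ae XnQ X0Q by (intro integral_cong_AE) auto
    also have "\<dots> = integral\<^sup>L Q (\<lambda>\<omega>. - X0 \<omega>) - real n"
    proof -
      have ic: "integrable Q (\<lambda>_. real n)" using ps by (simp add: prob_space_def finite_measure.integrable_const)
      have "integral\<^sup>L Q (\<lambda>\<omega>. - X0 \<omega> - real n) = integral\<^sup>L Q (\<lambda>\<omega>. - X0 \<omega>) - integral\<^sup>L Q (\<lambda>_. real n)"
        by (rule Bochner_Integration.integral_diff[OF integrable_minus[OF int] ic])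
      then show ?thesis using prob_space.prob_space[OF ps] by (simp add: lebesgue_integral_const)
    qed
    finally show ?thesis unfolding T_def by simp
  qed
  have Wle: "W \<le> ereal (r - real n)" for n
  proof -
    have "W \<le> (SUP Q\<in>Qset. T Q (Xn n))" unfolding W_def using Xn_rep by (rule INF_lower)
    also have "\<dots> \<le> ereal (r - real n)"
    proof (rule SUP_least)
      fix Q assume Q: "Q \<in> Qset"
      have "T Q X0 \<le> ereal r" using r rhoS[of X0] Q by (metis SUP_upper)
      then show "T Q (Xn n) \<le> ereal (r - real n)" using TXn[OF Q]
        by (cases "T Q X0") auto
    qed
    finally show ?thesis .
  qed
  have W: "W = -\<infinity>" using Wle by (rule ereal_to_minf)
  then show "(INF Xt\<in>reps M P X. SUP Q\<in>Qset.
               ereal (integral\<^sup>L Q (\<lambda>\<omega>. - Xt \<omega>)) - ereal (\<alpha>t Q)) = -\<infinity>"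
    unfolding W_def T_def .
  show "rhoP M \<alpha> P X = -\<infinity>" unfolding rhoP_def rhoS using W unfolding W_def .
  have IT: "(INF Xt\<in>reps M P X. T Q Xt) \<le> W" if "Q \<in> Qset" for Q
    unfolding W_def
  proof (rule INF_greatest)
    fix Xt assume "Xt \<in> reps M P X"
    then have "(INF Xt\<in>reps M P X. T Q Xt) \<le> T Q Xt" by (rule INF_lower)
    also have "\<dots> \<le> (SUP Q\<in>Qset. T Q Xt)" using that by (rule SUP_upper)
    finally show "(INF Xt\<in>reps M P X. T Q Xt) \<le> (SUP Q\<in>Qset. T Q Xt)" .
  qed
  have "(SUP Q\<in>Qset. INF Xt\<in>reps M P X. T Q Xt) \<le> -\<infinity>"
    using IT W by (intro SUP_least) auto
  then show "(SUP Q\<in>Qset. INF Xt\<in>reps M P X.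
               ereal (integral\<^sup>L Q (\<lambda>\<omega>. - Xt \<omega>)) - ereal (\<alpha>t Q)) = -\<infinity>"
    unfolding T_def by simp
  have "rho_tilde M \<alpha> P X \<le> -\<infinity>"
    unfolding rho_tilde_def
  proof (rule SUP_least)
    fix Q assume Q: "Q \<in> M1 M"
    show "(INF Xt\<in>reps M P X. ereal (integral\<^sup>L Q (\<lambda>\<omega>. - Xt \<omega>)) - \<alpha> Q) \<le> -\<infinity>"
    proof (cases "Q \<in> Qset")
      case True
      then show ?thesis using IT[OF True] W \<alpha>_def[of Q] unfolding T_def by simp
    next
      case False
      have "(INF Xt\<in>reps M P X. ereal (integral\<^sup>L Q (\<lambda>\<omega>. - Xt \<omega>)) - \<alpha> Q)
          \<le> ereal (integral\<^sup>L Q (\<lambda>\<omega>. - X0 \<omega>)) - \<alpha> Q" using X0 by (rule INF_lower)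
      then show ?thesis using False \<alpha>_def[of Q] by simp
    qed
  qed
  then show "rho_tilde M \<alpha> P X = -\<infinity>" by simp
  have "rho_hat M \<alpha> P X \<le> -\<infinity>"
    unfolding rho_hat_def
  proof (rule SUP_least)
    fix Q assume Q: "Q \<in> {Q \<in> M1 M. absolutely_continuous P Q}"
    have "Q \<notin> Qset"
    proof
      assume QQ: "Q \<in> Qset"
      have QM: "Q \<in> M1 M" using Q by auto
      have ps: "prob_space Q" and sQ: "sets Q = sets M" and spQ: "space Q = space M"
        using M1_D[OF QM] by auto
      have acQ: "absolutely_continuous Pbar Q" using QQ Qsub by auto
      have n1: "A \<in> null_sets Q" using A acQ unfolding absolutely_continuous_def by auto
      have "space P - A \<in> null_sets P" using A(3) AM M1_D[OF P] by (intro null_setsI) (auto intro: sets.compl_sets)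
      then have n2: "space Q - A \<in> null_sets Q" using Q spP spQ unfolding absolutely_continuous_def by auto
      have "space Q = (space Q - A) \<union> A" using AM sets.sets_into_space sQ spQ by auto
      then have "emeasure Q (space Q) = emeasure Q (space Q - A)"
        using n1 n2 emeasure_Un_null_set[of "space Q - A" Q A] by auto
      moreover have "emeasure Q (space Q - A) = 0" using n2 by auto
      ultimately show False using prob_space.emeasure_space_1[OF ps] by simp
    qed
    then show "ereal (integral\<^sup>L Q (\<lambda>\<omega>. - X \<omega>)) - \<alpha> Q \<le> -\<infinity>" using \<alpha>_def[of Q] by simp
  qed
  then show "rho_hat M \<alpha> P X = -\<infinity>" by simp
qed


lemma bdd_in:
  assumes "X \<in> bdd_meas M" "P \<in> M1 M"
  shows "X \<in> Linf P" "X \<in> reps M P X"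
proof -
  from assms(1) obtain c where "X \<in> borel_measurable M" "\<forall>\<omega>\<in>space M. \<bar>X \<omega>\<bar> \<le> c"
    unfolding bdd_meas_def by auto
  moreover have "space P = space M" using M1_D[OF assms(2)] by auto
  ultimately show "X \<in> Linf P" unfolding Linf_def using meas_M1[OF assms(2)]
    by (auto intro!: AE_I2 exI[of _ c])
  show "X \<in> reps M P X" unfolding reps_def using assms(1) by auto
qed

lemma ac_refl: "absolutely_continuous P P"
  unfolding absolutely_continuous_def by auto

theorem proposition3p10:
  fixes M :: "'a measure" and Pbar :: "'a measure"
    and Qset :: "'a measure set" and \<alpha>t :: "'a measure \<Rightarrow> real"
    and \<alpha> :: "'a measure \<Rightarrow> ereal"
  assumes Pbar: "Pbar \<in> M1 M"
    and Qsub: "Qset \<subseteq> {Q \<in> M1 M. absolutely_continuous Pbar Q}"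
    and Qclosed: "closedin (weak_star_top M) Qset"
    and \<alpha>t_bdd: "\<exists>c. \<forall>Q\<in>Qset. c \<le> \<alpha>t Q"
    and \<alpha>_def: "\<And>Q. \<alpha> Q = (if Q \<in> Qset then ereal (\<alpha>t Q) else \<infinity>)"
    and rho_real: "\<And>X. X \<in> bdd_meas M \<Longrightarrow> \<bar>rho M \<alpha> X\<bar> \<noteq> \<infinity>"
  shows
    "(\<forall>P\<in>M1 M. (absolutely_continuous P Pbar \<or> mut_singular Pbar P) \<longrightarrow>
        accP M \<alpha> P = accP_hat M \<alpha> P \<and>
        (\<forall>X\<in>Linf P.
           rhoP M \<alpha> P X = rho_hat M \<alpha> P X \<and> rho_hat M \<alpha> P X = rho_tilde M \<alpha> P X \<and>
           (SUP Q\<in>Qset. INF Xt\<in>reps M P X.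
               ereal (integral\<^sup>L Q (\<lambda>\<omega>. - Xt \<omega>)) - ereal (\<alpha>t Q))
             = (INF Xt\<in>reps M P X. SUP Q\<in>Qset.
               ereal (integral\<^sup>L Q (\<lambda>\<omega>. - Xt \<omega>)) - ereal (\<alpha>t Q)) \<and>
           (INF Xt\<in>reps M P X. SUP Q\<in>Qset.
               ereal (integral\<^sup>L Q (\<lambda>\<omega>. - Xt \<omega>)) - ereal (\<alpha>t Q))
             = rhoP M \<alpha> P X))
     \<and> (\<forall>P\<in>M1 M. absolutely_continuous P Pbar \<longrightarrow>
          (\<forall>X\<in>bdd_meas M. rhoP M \<alpha> P X = rho M \<alpha> X))
     \<and> (\<forall>P\<in>M1 M. mut_singular Pbar P \<longrightarrow>
          (\<forall>X\<in>Linf P. rhoP M \<alpha> P X = -\<infinity>))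
     \<and> (\<forall>P\<in>M1 M. \<forall>X\<in>bdd_meas M.
          rho_hat M \<alpha> P X \<le> rhoP M \<alpha> P X \<and> rhoP M \<alpha> P X \<le> rho M \<alpha> X \<and>
          rho M \<alpha> X = rhoP M \<alpha> Pbar X \<and> rhoP M \<alpha> Pbar X = rho_hat M \<alpha> Pbar X)
     \<and> (\<forall>P\<in>M1 M. \<forall>X\<in>Linf P \<inter> Linf Pbar.
          rho_hat M \<alpha> P X \<le> rhoP M \<alpha> P X \<and> rhoP M \<alpha> P X \<le> rhoP M \<alpha> Pbar X \<and>
          rhoP M \<alpha> Pbar X = rho_hat M \<alpha> Pbar X)"
proof -
  note AC = ac_case[OF Qsub \<alpha>_def]
  have rr: "\<forall>X\<in>bdd_meas M. \<bar>rho M \<alpha> X\<bar> \<noteq> \<infinity>"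
  proof
    fix X assume "X \<in> bdd_meas M" then show "\<bar>rho M \<alpha> X\<bar> \<noteq> \<infinity>" by (rule rho_real)
  qed
  note SG = sing_case[OF Qsub \<alpha>_def rr Pbar]
  have main: "rhoP M \<alpha> P X = rho_hat M \<alpha> P X \<and> rho_hat M \<alpha> P X = rho_tilde M \<alpha> P X \<and>
           (SUP Q\<in>Qset. INF Xt\<in>reps M P X.
               ereal (integral\<^sup>L Q (\<lambda>\<omega>. - Xt \<omega>)) - ereal (\<alpha>t Q))
             = (INF Xt\<in>reps M P X. SUP Q\<in>Qset.
               ereal (integral\<^sup>L Q (\<lambda>\<omega>. - Xt \<omega>)) - ereal (\<alpha>t Q)) \<and>
           (INF Xt\<in>reps M P X. SUP Q\<in>Qset.
               ereal (integral\<^sup>L Q (\<lambda>\<omega>. - Xt \<omega>)) - ereal (\<alpha>t Q))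
             = rhoP M \<alpha> P X"
    if P: "P \<in> M1 M" and c: "absolutely_continuous P Pbar \<or> mut_singular Pbar P"
      and X: "X \<in> Linf P" for P X
    using c
  proof
    assume ac: "absolutely_continuous P Pbar"
    show ?thesis using AC(2-6)[OF P ac X] by simp
  next
    assume sg: "mut_singular Pbar P"
    show ?thesis using SG(1-5)[OF P sg X] by simp
  qed
  have pbar: "rho M \<alpha> Xt = rhoP M \<alpha> Pbar X" "rhoP M \<alpha> Pbar X = rho_hat M \<alpha> Pbar X"
    if "X \<in> Linf Pbar" "Xt \<in> reps M Pbar X" for X Xt
    using AC(1,2,3)[OF Pbar ac_refl that(1)] that(2) by auto
  show ?thesis
  proof (intro conjI ballI impI)
    fix P assume P: "P \<in> M1 M" and c: "absolutely_continuous P Pbar \<or> mut_singular Pbar P"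
    show "accP M \<alpha> P = accP_hat M \<alpha> P"
      unfolding accP_def accP_hat_def using main[OF P c] by auto
    fix X assume X: "X \<in> Linf P"
    note m = main[OF P c X]
    show "rhoP M \<alpha> P X = rho_hat M \<alpha> P X" using m by blast
    show "rho_hat M \<alpha> P X = rho_tilde M \<alpha> P X" using m by blast
    show "(SUP Q\<in>Qset. INF Xt\<in>reps M P X.
               ereal (integral\<^sup>L Q (\<lambda>\<omega>. - Xt \<omega>)) - ereal (\<alpha>t Q))
             = (INF Xt\<in>reps M P X. SUP Q\<in>Qset.
               ereal (integral\<^sup>L Q (\<lambda>\<omega>. - Xt \<omega>)) - ereal (\<alpha>t Q))" using m by blast
    show "(INF Xt\<in>reps M P X. SUP Q\<in>Qset.
               ereal (integral\<^sup>L Q (\<lambda>\<omega>. - Xt \<omega>)) - ereal (\<alpha>t Q))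
             = rhoP M \<alpha> P X" using m by blast
  next
    fix P X assume P: "P \<in> M1 M" and ac: "absolutely_continuous P Pbar" and X: "X \<in> bdd_meas M"
    show "rhoP M \<alpha> P X = rho M \<alpha> X"
      using AC(1,2)[OF P ac bdd_in(1)[OF X P]] bdd_in(2)[OF X P] by auto
  next
    fix P X assume P: "P \<in> M1 M" and sg: "mut_singular Pbar P" and X: "X \<in> Linf P"
    show "rhoP M \<alpha> P X = -\<infinity>" using SG(1)[OF P sg X] .
  next
    fix P X assume P: "P \<in> M1 M" and X: "X \<in> bdd_meas M"
    show "rho_hat M \<alpha> P X \<le> rhoP M \<alpha> P X" using rho_hat_le[OF P bdd_in(1)[OF X P]] .
    show "rhoP M \<alpha> P X \<le> rho M \<alpha> X" unfolding rhoP_def using bdd_in(2)[OF X P] by (rule INF_lower)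
    show "rho M \<alpha> X = rhoP M \<alpha> Pbar X" using pbar(1)[OF bdd_in[OF X Pbar]] .
    show "rhoP M \<alpha> Pbar X = rho_hat M \<alpha> Pbar X" using pbar(2)[OF bdd_in[OF X Pbar]] .
  next
    fix P X assume P: "P \<in> M1 M" and X: "X \<in> Linf P \<inter> Linf Pbar"
    show "rho_hat M \<alpha> P X \<le> rhoP M \<alpha> P X" using rho_hat_le[OF P] X by auto
    from X obtain c1 c2 where XP: "X \<in> borel_measurable P" and c1: "AE \<omega> in P. \<bar>X \<omega>\<bar> \<le> c1"
      and c2: "AE \<omega> in Pbar. \<bar>X \<omega>\<bar> \<le> c2" unfolding Linf_def by auto
    have XM: "X \<in> borel_measurable M" using XP meas_M1[OF P] by auto
    define c where "c = max c1 c2"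
    have "AE \<omega> in P. \<bar>X \<omega>\<bar> \<le> c" using c1 by eventually_elim (auto simp: c_def)
    then have r1: "(\<lambda>\<omega>. if \<bar>X \<omega>\<bar> \<le> c then X \<omega> else 0) \<in> reps M P X"
      by (rule trunc_rep[OF P XM])
    have "AE \<omega> in Pbar. \<bar>X \<omega>\<bar> \<le> c" using c2 by eventually_elim (auto simp: c_def)
    then have r2: "(\<lambda>\<omega>. if \<bar>X \<omega>\<bar> \<le> c then X \<omega> else 0) \<in> reps M Pbar X"
      by (rule trunc_rep[OF Pbar XM])
    have "rhoP M \<alpha> P X \<le> rho M \<alpha> (\<lambda>\<omega>. if \<bar>X \<omega>\<bar> \<le> c then X \<omega> else 0)"
      unfolding rhoP_def using r1 by (rule INF_lower)
    also have "\<dots> = rhoP M \<alpha> Pbar X" using pbar(1)[OF _ r2] X by auto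
    finally show "rhoP M \<alpha> P X \<le> rhoP M \<alpha> Pbar X" .
    show "rhoP M \<alpha> Pbar X = rho_hat M \<alpha> Pbar X" using pbar(2)[OF _ r2] X by auto
  qed
qed

end
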